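(* Let $E$ be a real vector space, $M$ a linear subspace of $E$, $S$ a sublinear functional on $E$, $P(x)=-S(-x)$ for every $x\in E$, $T(x)=\inf_{y\in E}\{S(x+y)-P(y)\}$ for $x\in E$, and $f_0$ a linear functional on $M$. Then the conditions "$P(x)\le S(x)$ for every $x\in E$, and $P(x)\le f_0(x)\le S(x)$ for every $x\in M$" hold if and only if $f_0(x)\le T(x)$ for every $x\in M$.
   Context: A functional $S:E\to\mathbb{R}$ is sublinear if $S(x+y)\le S(x)+S(y)$ for all $x,y\in E$ and $S(\alpha x)=\alpha S(x)$ for all $x\in E$, $\alpha>0$. *)

theory Defs
  imports Complex_Main "HOL-Library.Extended_Real"
begin

definition sublinear :: "('a::real_vector \<Rightarrow> real) \<Rightarrow> bool" where
  "sublinear S \<longleftrightarrow> (\<forall>x y. S (x + y) \<le> S x + S y) \<and> (\<forall>x \<alpha>. \<alpha> > 0 \<longrightarrow> S (\<alpha> *\<^sub>R x) = \<alpha> * S x)"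

text \<open>A linear functional defined on the subspace M (values outside M are irrelevant).\<close>
definition linear_functional_on :: "'a::real_vector set \<Rightarrow> ('a \<Rightarrow> real) \<Rightarrow> bool" where
  "linear_functional_on M f \<longleftrightarrow>
     (\<forall>x\<in>M. \<forall>y\<in>M. f (x + y) = f x + f y) \<and> (\<forall>x\<in>M. \<forall>c. f (c *\<^sub>R x) = c * f x)"

definition Pfun :: "('a::real_vector \<Rightarrow> real) \<Rightarrow> 'a \<Rightarrow> real" where
  "Pfun S x = - S (- x)"

text \<open>T(x) = inf_y (S(x+y) - P(y)), taken in the extended reals (may be -infinity).\<close>
definition Tfun :: "('a::real_vector \<Rightarrow> real) \<Rightarrow> 'a \<Rightarrow> ereal" where
  "Tfun S x = (INF y. ereal (S (x + y) - Pfun S y))"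

end

theory Submission
  imports Defs
begin

lemma S0: assumes "sublinear S" shows "S 0 = 0"
proof -
  have "S ((2::real) *\<^sub>R 0) = 2 * S 0" using assms unfolding sublinear_def by (meson zero_less_numeral)
  thus ?thesis by simp
qed

lemma PleS: assumes "sublinear (S::'a::real_vector \<Rightarrow> real)" shows "Pfun S x \<le> S x"
proof -
  have "S (x + - x) \<le> S x + S (- x)" using assms unfolding sublinear_def by blast
  thus ?thesis using S0[OF assms] by (simp add: Pfun_def)
qed

theorem corollary4p1:
  fixes S :: "'a::real_vector \<Rightarrow> real" and M :: "'a set" and f0 :: "'a \<Rightarrow> real"
  assumes "subspace M" and "sublinear S" and "linear_functional_on M f0"
  shows "((\<forall>x. Pfun S x \<le> S x) \<and> (\<forall>x\<in>M. Pfun S x \<le> f0 x \<and> f0 x \<le> S x))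
         \<longleftrightarrow> (\<forall>x\<in>M. ereal (f0 x) \<le> Tfun S x)"
proof
  assume H: "((\<forall>x. Pfun S x \<le> S x) \<and> (\<forall>x\<in>M. Pfun S x \<le> f0 x \<and> f0 x \<le> S x))"
  show "\<forall>x\<in>M. ereal (f0 x) \<le> Tfun S x"
  proof (intro ballI)
    fix x assume x: "x \<in> M"
    have "f0 x \<le> S (x + y) - Pfun S y" for y
    proof -
      have "S ((x + y) + - y) \<le> S (x+y) + S (- y)" using assms(2) unfolding sublinear_def by blast
      thus ?thesis using H x by (force simp add: Pfun_def)
    qed
    thus "ereal (f0 x) \<le> Tfun S x" unfolding Tfun_def by (simp add: le_INF_iff)
  qed
next
  assume H: "\<forall>x\<in>M. ereal (f0 x) \<le> Tfun S x"
  have A: "f0 x \<le> S (x + y) - Pfun S y" if "x \<in> M" for x y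
  proof -
    have "ereal (f0 x) \<le> ereal (S (x + y) - Pfun S y)"
      using H that unfolding Tfun_def by (simp add: le_INF_iff)
    thus ?thesis by simp
  qed
  have P0: "Pfun S 0 = 0" using S0[OF assms(2)] by (simp add: Pfun_def)
  show "((\<forall>x. Pfun S x \<le> S x) \<and> (\<forall>x\<in>M. Pfun S x \<le> f0 x \<and> f0 x \<le> S x))"
  proof (intro conjI allI ballI)
    fix x show "Pfun S x \<le> S x" by (rule PleS[OF assms(2)])
  next
    fix x assume x: "x \<in> M"
    show "f0 x \<le> S x" using A[OF x, of 0] P0 by simp
    have mx: "- x \<in> M" using assms(1) x by (simp add: subspace_neg)
    have "f0 (- x) \<le> S (- x)" using A[OF mx, of 0] P0 by simp
    moreover have "f0 ((-1) *\<^sub>R x) = (-1) * f0 x" using assms(3) x unfolding linear_functional_on_def by blast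
    ultimately show "Pfun S x \<le> f0 x" by (simp add: Pfun_def)
  qed
qed

end
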